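(* Let $V$ be a finite node set with $|V|=n$ and let $E,E'$ be edge sets of simple undirected graphs on $V$ whose symmetric difference has at most $K$ edges. For an edge set $F$ let $A(F)$ be its adjacency matrix, $D(F)$ the diagonal matrix of self-loop-augmented degrees $\tilde d_v=\deg_F(v)+1$, and $\tilde A(F)=D(F)^{-1/2}(A(F)+I)D(F)^{-1/2}$. Let $\tilde d_{\min}$ and $\tilde d_{\max}$ be the minimum and maximum self-loop-augmented degrees over the graphs $(V,E)$ and $(V,E')$, and assume $\tilde d_{\max}/\tilde d_{\min}\le c$. Then \[ \|\tilde A(E')-\tilde A(E)\|_2\le C\,\frac{K}{\tilde d_{\min}}, \] where $\|\cdot\|_2$ is the spectral norm and $C$ is a constant depending only on $c$. *)

theory Defs
  imports Complex_Main
begin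

definition simple_edges :: "'a set \<Rightarrow> 'a set set \<Rightarrow> bool" where
  "simple_edges V E \<longleftrightarrow> E \<subseteq> {e. \<exists>u v. u \<in> V \<and> v \<in> V \<and> u \<noteq> v \<and> e = {u, v}}"

definition adj :: "'a set set \<Rightarrow> 'a \<Rightarrow> 'a \<Rightarrow> real" where
  "adj F u v = (if {u, v} \<in> F then 1 else 0)"

definition degree :: "'a set \<Rightarrow> 'a set set \<Rightarrow> 'a \<Rightarrow> nat" where
  "degree V F v = card {u \<in> V. {u, v} \<in> F}"

definition tdeg :: "'a set \<Rightarrow> 'a set set \<Rightarrow> 'a \<Rightarrow> nat" where
  "tdeg V F v = degree V F v + 1"

definition norm_adj :: "'a set \<Rightarrow> 'a set set \<Rightarrow> 'a \<Rightarrow> 'a \<Rightarrow> real" where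
  "norm_adj V F u v =
     (adj F u v + (if u = v then 1 else 0)) / (sqrt (real (tdeg V F u)) * sqrt (real (tdeg V F v)))"

definition spec_norm :: "'a set \<Rightarrow> ('a \<Rightarrow> 'a \<Rightarrow> real) \<Rightarrow> real" where
  "spec_norm V M = Sup {sqrt (\<Sum>u\<in>V. (\<Sum>v\<in>V. M u v * x v)^2) | x. (\<Sum>v\<in>V. (x v)^2) \<le> 1}"

end

theory Submission imports Defs "HOL-Analysis.L2_Norm" begin

lemma sqrt_part:
  fixes a b g mu :: real
  assumes "mu > 0" "a \<ge> mu" "b \<ge> mu" "g \<ge> mu"
  shows "\<bar>1/b - 1/a\<bar> / g \<le> \<bar>a^2 - b^2\<bar> / mu^4"
proof -
  have pos: "a > 0" "b > 0" "g > 0" using assms by auto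
  have e1: "\<bar>1/b - 1/a\<bar> / g = \<bar>a - b\<bar> / (a*b*g)"
    using pos by (simp add: field_simps abs_mult abs_divide)
  have m3: "mu^3 \<le> a*b*g"
  proof -
    have "mu*mu \<le> a*b" using assms by (intro mult_mono) auto
    then have "mu*mu*mu \<le> a*b*g" using assms by (intro mult_mono) auto
    then show ?thesis by (simp add: power3_eq_cube)
  qed
  have "\<bar>a - b\<bar> / (a*b*g) \<le> \<bar>a - b\<bar> / mu^3"
    using m3 assms by (intro divide_left_mono) auto
  also have "\<dots> = \<bar>a - b\<bar> * mu / mu^4" using assms by (simp add: power_numeral_reduce)
  also have "\<dots> \<le> \<bar>a - b\<bar> * (a + b) / mu^4"
    using assms by (intro divide_right_mono mult_left_mono) auto
  also have "\<bar>a - b\<bar> * (a + b) = \<bar>a^2 - b^2\<bar>"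
  proof -
    have "a^2 - b^2 = (a-b)*(a+b)" by (simp add: power2_eq_square algebra_simps)
    then show ?thesis using pos by (simp add: abs_mult)
  qed
  finally show ?thesis using e1 by simp
qed

lemma entry_bound:
  fixes p q r s m :: real
  assumes "m > 0" "p \<ge> m" "q \<ge> m" "r \<ge> m" "s \<ge> m"
  shows "\<bar>1/(sqrt q * sqrt s) - 1/(sqrt p * sqrt r)\<bar> \<le> (\<bar>q - p\<bar> + \<bar>s - r\<bar>) / m^2"
proof -
  have sq: "sqrt m > 0" "sqrt p \<ge> sqrt m" "sqrt q \<ge> sqrt m" "sqrt r \<ge> sqrt m" "sqrt s \<ge> sqrt m"
    using assms by auto
  have m4: "sqrt m ^ 4 = m^2" using assms
    by (metis power_mult real_sqrt_pow2 less_imp_le numeral_times_numeral semiring_norm(12) semiring_norm(13) mult.commute)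
  have split: "1/(sqrt q * sqrt s) - 1/(sqrt p * sqrt r)
     = (1/sqrt q - 1/sqrt p) / sqrt s + (1/sqrt s - 1/sqrt r) / sqrt p"
    using sq by (simp add: field_simps)
  have t1: "\<bar>1/sqrt q - 1/sqrt p\<bar> / sqrt s \<le> \<bar>q - p\<bar> / m^2"
    using sqrt_part[of "sqrt m" "sqrt p" "sqrt q" "sqrt s"] sq assms m4 by (simp add: abs_minus_commute)
  have t2: "\<bar>1/sqrt s - 1/sqrt r\<bar> / sqrt p \<le> \<bar>s - r\<bar> / m^2"
    using sqrt_part[of "sqrt m" "sqrt r" "sqrt s" "sqrt p"] sq assms m4 by (simp add: abs_minus_commute)
  have "\<bar>1/(sqrt q * sqrt s) - 1/(sqrt p * sqrt r)\<bar>
     \<le> \<bar>1/sqrt q - 1/sqrt p\<bar> / sqrt s + \<bar>1/sqrt s - 1/sqrt r\<bar> / sqrt p"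
    unfolding split by (rule order_trans[OF abs_triangle_ineq]) (use sq in \<open>simp add: abs_divide\<close>)
  also have "\<dots> \<le> (\<bar>q - p\<bar> + \<bar>s - r\<bar>) / m^2" using t1 t2 by (simp add: add_divide_distrib)
  finally show ?thesis .
qed

lemma card_diff_bound:
  assumes "finite V"
  shows "\<bar>real (card {w\<in>V. P w}) - real (card {w\<in>V. Q w})\<bar> \<le> real (card {w\<in>V. P w \<noteq> Q w})"
proof -
  let ?A = "{w\<in>V. P w}" and ?B = "{w\<in>V. Q w}" and ?D = "{w\<in>V. P w \<noteq> Q w}"
  have fD: "finite ?D" using assms by auto
  have "card ?A \<le> card (?B \<union> (?A - ?B))" using assms by (intro card_mono) auto
  also have "\<dots> \<le> card ?B + card (?A - ?B)" by (rule card_Un_le)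
  also have "card (?A - ?B) \<le> card ?D" using fD by (intro card_mono) auto
  finally have 1: "card ?A \<le> card ?B + card ?D" by simp
  have "card ?B \<le> card (?A \<union> (?B - ?A))" using assms by (intro card_mono) auto
  also have "\<dots> \<le> card ?A + card (?B - ?A)" by (rule card_Un_le)
  also have "card (?B - ?A) \<le> card ?D" using fD by (intro card_mono) auto
  finally have 2: "card ?B \<le> card ?A + card ?D" by simp
  show ?thesis using 1 2 by linarith
qed
lemma card_filter_sum:
  assumes "finite A"
  shows "card {x\<in>A. P x} = (\<Sum>x\<in>A. if P x then 1 else 0)"
  using sum.inter_filter[OF assms, of "\<lambda>_. 1::nat" P] by simp

lemma sum_edges_bound:
  assumes "finite V" "finite S" "\<forall>e\<in>S. \<exists>x y. e = {x,y}"
  shows "(\<Sum>u\<in>V. card {w\<in>V. {u,w}\<in>S}) \<le> 2 * card S"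
proof -
  have "card {w\<in>V. {u,w}\<in>S} \<le> card {e\<in>S. u\<in>e}" for u
  proof (rule card_inj_on_le[where f="\<lambda>w. {u,w}"])
    show "inj_on (\<lambda>w. {u,w}) {w\<in>V. {u,w}\<in>S}" by (auto simp: inj_on_def doubleton_eq_iff)
    show "(\<lambda>w. {u,w}) ` {w\<in>V. {u,w}\<in>S} \<subseteq> {e\<in>S. u\<in>e}" by auto
    show "finite {e\<in>S. u\<in>e}" using assms by auto
  qed
  then have "(\<Sum>u\<in>V. card {w\<in>V. {u,w}\<in>S}) \<le> (\<Sum>u\<in>V. card {e\<in>S. u\<in>e})" by (rule sum_mono)
  also have "\<dots> = (\<Sum>u\<in>V. \<Sum>e\<in>S. if u\<in>e then 1 else 0)"
    using assms by (simp add: card_filter_sum)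
  also have "\<dots> = (\<Sum>e\<in>S. \<Sum>u\<in>V. if u\<in>e then 1 else 0)" by (rule sum.swap)
  also have "\<dots> = (\<Sum>e\<in>S. card {u\<in>V. u\<in>e})"
    using assms by (simp add: card_filter_sum)
  also have "\<dots> \<le> (\<Sum>e\<in>S. 2)"
  proof (rule sum_mono)
    fix e assume "e \<in> S"
    then obtain x y where e: "e = {x,y}" using assms by blast
    have "card {u\<in>V. u\<in>e} \<le> card e" by (rule card_mono) (auto simp: e)
    also have "card e \<le> 2" by (simp add: e card_insert_if)
    finally show "card {u\<in>V. u\<in>e} \<le> 2" .
  qed
  finally show ?thesis by simp
qed

lemma na_bound:
  assumes "\<And>x. {x} \<notin> F" "m > 0" "m \<le> real (tdeg V F u)" "m \<le> real (tdeg V F v)"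
  shows "0 \<le> norm_adj V F u v \<and> norm_adj V F u v \<le> 1/m"
proof -
  define a where "a = adj F u v + (if u = v then 1 else 0)"
  have a: "0 \<le> a" "a \<le> 1" using assms(1) by (auto simp: a_def adj_def)
  have "m = sqrt m * sqrt m" using assms by simp
  also have "\<dots> \<le> sqrt (real (tdeg V F u)) * sqrt (real (tdeg V F v))"
    using assms by (intro mult_mono) auto
  finally have den: "m \<le> sqrt (real (tdeg V F u)) * sqrt (real (tdeg V F v))" .
  have "norm_adj V F u v = a / (sqrt (real (tdeg V F u)) * sqrt (real (tdeg V F v)))"
    by (simp add: norm_adj_def a_def)
  moreover have "a / (sqrt (real (tdeg V F u)) * sqrt (real (tdeg V F v))) \<le> 1 / m"
    using a den assms(2) by (intro frac_le) auto
  moreover have "0 \<le> a / (sqrt (real (tdeg V F u)) * sqrt (real (tdeg V F v)))"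
    using a by simp
  ultimately show ?thesis by simp
qed


theorem lemma5p3:
  fixes c :: real
  shows "\<exists>C::real. \<forall>(V::'a set) E E' (K::nat).
     finite V \<and> V \<noteq> {} \<and> simple_edges V E \<and> simple_edges V E' \<and>
     card ((E - E') \<union> (E' - E)) \<le> K \<and>
     real (Max (tdeg V E ` V \<union> tdeg V E' ` V)) / real (Min (tdeg V E ` V \<union> tdeg V E' ` V)) \<le> c
     \<longrightarrow> spec_norm V (\<lambda>u v. norm_adj V E' u v - norm_adj V E u v)
           \<le> C * real K / real (Min (tdeg V E ` V \<union> tdeg V E' ` V))"
proof (intro exI[of _ "2 + 4*c"] allI impI, elim conjE)
  fix V :: "'a set" and E E' :: "'a set set" and K :: nat
  assume finV: "finite V" and neV: "V \<noteq> {}" and sE: "simple_edges V E" and sE': "simple_edges V E'"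
    and cardK: "card ((E - E') \<union> (E' - E)) \<le> K"
    and ratio: "real (Max (tdeg V E ` V \<union> tdeg V E' ` V)) / real (Min (tdeg V E ` V \<union> tdeg V E' ` V)) \<le> c"
  define D where "D = tdeg V E ` V \<union> tdeg V E' ` V"
  define m where "m = real (Min D)"
  define S where "S = (E - E') \<union> (E' - E)"
  have finD: "finite D" "D \<noteq> {}" using finV neV by (auto simp: D_def)
  have tge1: "\<And>F u. tdeg V F u \<ge> 1" by (simp add: tdeg_def)
  have m1: "m \<ge> 1" using Min_in[OF finD] tge1 unfolding m_def D_def by fastforce
  have mpos: "m > 0" using m1 by simp
  have mle: "m \<le> real (tdeg V E u)" "m \<le> real (tdeg V E' u)" if "u \<in> V" for u
    using Min_le[OF finD(1)] that unfolding m_def D_def by auto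
  have MaxD: "real (Max D) \<le> c * m"
    using ratio mpos by (simp add: D_def m_def pos_divide_le_eq)
  have Mle: "real (tdeg V E u) \<le> c * m" if "u \<in> V" for u
  proof -
    have "tdeg V E u \<le> Max D" using Max_ge[OF finD(1)] that by (auto simp: D_def)
    then show ?thesis using MaxD by linarith
  qed
  have cpos: "c > 0"
  proof -
    obtain u where "u \<in> V" using neV by blast
    then have "1 \<le> c * m" using Mle[of u] tge1[of E u] by linarith
    then have "0 < c * m" by linarith
    then show ?thesis using mpos by (auto simp: zero_less_mult_iff)
  qed
  have noloop: "{u} \<notin> E" "{u} \<notin> E'" for u
    using sE sE' unfolding simple_edges_def by (auto simp: doubleton_eq_iff)
  have SsubP: "S \<subseteq> Pow V" using sE sE' unfolding simple_edges_def S_def by auto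
  have finS: "finite S" using finV SsubP finite_subset by blast
  have Sform: "\<forall>e\<in>S. \<exists>x y. e = {x,y}" using sE sE' unfolding simple_edges_def S_def by blast
  define s where "s u = card {w\<in>V. {u,w}\<in>S}" for u
  define \<delta> where "\<delta> u = \<bar>real (tdeg V E' u) - real (tdeg V E u)\<bar>" for u
  have dnn: "\<delta> u \<ge> 0" for u by (simp add: \<delta>_def)
  have dle: "\<delta> u \<le> real (s u)" for u
  proof -
    have "\<delta> u = \<bar>real (card {w\<in>V. {w,u}\<in>E'}) - real (card {w\<in>V. {w,u}\<in>E})\<bar>"
      by (simp add: \<delta>_def tdeg_def degree_def)
    also have "\<dots> \<le> real (card {w\<in>V. ({w,u}\<in>E') \<noteq> ({w,u}\<in>E)})"
      by (rule card_diff_bound[OF finV])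
    also have "{w\<in>V. ({w,u}\<in>E') \<noteq> ({w,u}\<in>E)} = {w\<in>V. {u,w}\<in>S}"
      by (auto simp: S_def insert_commute)
    finally show ?thesis by (simp add: s_def)
  qed
  have sumS: "(\<Sum>u\<in>V. real (s u)) \<le> 2 * real K"
  proof -
    have "(\<Sum>u\<in>V. s u) \<le> 2 * card S" unfolding s_def by (rule sum_edges_bound[OF finV finS Sform])
    then have "(\<Sum>u\<in>V. s u) \<le> 2 * K" using cardK by (simp add: S_def)
    then show ?thesis by (metis of_nat_le_iff of_nat_sum of_nat_mult of_nat_numeral)
  qed
  have sumd: "(\<Sum>u\<in>V. \<delta> u) \<le> 2 * real K"
    using sum_mono[of V \<delta> "\<lambda>u. real (s u)"] dle sumS by (meson order.trans)
  define P where "P u v \<longleftrightarrow> {u,v}\<in>E \<or> u = v" for u v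
  have Psym: "P u v = P v u" for u v by (auto simp: P_def insert_commute)
  define B where "B u v = (if {u,v}\<in>S then 1/m else 0) + (if P u v then (\<delta> u + \<delta> v)/m^2 else 0)" for u v
  have Bnn: "B u v \<ge> 0" for u v using dnn mpos by (simp add: B_def)
  have entry: "\<bar>norm_adj V E' u v - norm_adj V E u v\<bar> \<le> B u v" if uv: "u\<in>V" "v\<in>V" for u v
  proof -
    consider (diff) "{u,v} \<in> S" | (same1) "{u,v} \<notin> S" "P u v" | (same0) "{u,v}\<notin>S" "\<not> P u v" by blast
    then show ?thesis
    proof cases
      case diff
      have "0 \<le> norm_adj V E u v \<and> norm_adj V E u v \<le> 1/m"
        by (rule na_bound) (use noloop mpos mle uv in auto)
      moreover have "0 \<le> norm_adj V E' u v \<and> norm_adj V E' u v \<le> 1/m"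
        by (rule na_bound) (use noloop mpos mle uv in auto)
      moreover have "1/m \<le> B u v" using diff dnn mpos by (simp add: B_def)
      ultimately show ?thesis by linarith
    next
      case same1
      have a1: "adj E u v + (if u = v then 1 else 0) = 1" "adj E' u v + (if u = v then 1 else 0) = 1"
        using same1 noloop by (auto simp: adj_def P_def S_def)
      have "\<bar>norm_adj V E' u v - norm_adj V E u v\<bar>
        = \<bar>1/(sqrt (real (tdeg V E' u)) * sqrt (real (tdeg V E' v))) - 1/(sqrt (real (tdeg V E u)) * sqrt (real (tdeg V E v)))\<bar>"
        unfolding norm_adj_def a1 by simp
      also have "\<dots> \<le> (\<bar>real (tdeg V E' u) - real (tdeg V E u)\<bar> + \<bar>real (tdeg V E' v) - real (tdeg V E v)\<bar>) / m^2"
        by (rule entry_bound) (use mpos mle uv in auto)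
      also have "\<dots> \<le> B u v" using same1 by (simp add: B_def \<delta>_def)
      finally show ?thesis .
    next
      case same0
      have "adj E u v + (if u = v then 1 else 0) = 0" "adj E' u v + (if u = v then 1 else 0) = 0"
        using same0 by (auto simp: adj_def P_def S_def)
      then have "norm_adj V E' u v - norm_adj V E u v = 0" by (simp add: norm_adj_def)
      then show ?thesis using Bnn by simp
    qed
  qed
  define R where "R u = (\<Sum>v\<in>V. B u v)" for u
  have Rnn: "R u \<ge> 0" for u unfolding R_def by (intro sum_nonneg) (use Bnn in auto)
  have spec: "spec_norm V (\<lambda>u v. norm_adj V E' u v - norm_adj V E u v) \<le> (\<Sum>u\<in>V. R u)"
    unfolding spec_norm_def
  proof (rule cSup_least)
    show "{sqrt (\<Sum>u\<in>V. (\<Sum>v\<in>V. (norm_adj V E' u v - norm_adj V E u v) * x v)\<^sup>2) |x. (\<Sum>v\<in>V. (x v)\<^sup>2) \<le> 1} \<noteq> {}"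
    proof -
      have "sqrt (\<Sum>u\<in>V. (\<Sum>v\<in>V. (norm_adj V E' u v - norm_adj V E u v) * (\<lambda>_. 0) v)\<^sup>2)
        \<in> {sqrt (\<Sum>u\<in>V. (\<Sum>v\<in>V. (norm_adj V E' u v - norm_adj V E u v) * x v)\<^sup>2) |x. (\<Sum>v\<in>V. (x v)\<^sup>2) \<le> 1}"
        by (rule CollectI, rule exI[of _ "\<lambda>_. 0"]) simp
      then show ?thesis by blast
    qed
  next
    fix y assume "y \<in> {sqrt (\<Sum>u\<in>V. (\<Sum>v\<in>V. (norm_adj V E' u v - norm_adj V E u v) * x v)\<^sup>2) |x. (\<Sum>v\<in>V. (x v)\<^sup>2) \<le> 1}"
    then obtain x where y: "y = sqrt (\<Sum>u\<in>V. (\<Sum>v\<in>V. (norm_adj V E' u v - norm_adj V E u v) * x v)\<^sup>2)"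
      and x: "(\<Sum>v\<in>V. (x v)\<^sup>2) \<le> 1" by blast
    have xb: "\<bar>x v\<bar> \<le> 1" if "v \<in> V" for v
    proof -
      have "(x v)^2 \<le> (\<Sum>v\<in>V. (x v)\<^sup>2)" by (rule member_le_sum) (use that finV in auto)
      then have "(x v)^2 \<le> 1^2" using x by simp
      then show ?thesis using abs_le_square_iff by (metis abs_one)
    qed
    have rowb: "\<bar>\<Sum>v\<in>V. (norm_adj V E' u v - norm_adj V E u v) * x v\<bar> \<le> R u" if "u \<in> V" for u
    proof -
      have "\<bar>\<Sum>v\<in>V. (norm_adj V E' u v - norm_adj V E u v) * x v\<bar>
          \<le> (\<Sum>v\<in>V. \<bar>(norm_adj V E' u v - norm_adj V E u v) * x v\<bar>)" by (rule sum_abs)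
      also have "\<dots> \<le> (\<Sum>v\<in>V. B u v)"
      proof (rule sum_mono)
        fix v assume v: "v \<in> V"
        have "\<bar>(norm_adj V E' u v - norm_adj V E u v) * x v\<bar>
           = \<bar>norm_adj V E' u v - norm_adj V E u v\<bar> * \<bar>x v\<bar>" by (simp add: abs_mult)
        also have "\<dots> \<le> B u v * 1"
          by (intro mult_mono) (use entry[OF that v] xb[OF v] Bnn in auto)
        finally show "\<bar>(norm_adj V E' u v - norm_adj V E u v) * x v\<bar> \<le> B u v" by simp
      qed
      finally show ?thesis by (simp add: R_def)
    qed
    have "y \<le> sqrt (\<Sum>u\<in>V. (R u)^2)"
      unfolding y
    proof (intro real_sqrt_le_mono sum_mono)
      fix u assume u: "u \<in> V"
      show "(\<Sum>v\<in>V. (norm_adj V E' u v - norm_adj V E u v) * x v)\<^sup>2 \<le> (R u)\<^sup>2"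
        using rowb[OF u] Rnn[of u] by (simp add: abs_le_square_iff[symmetric])
    qed
    also have "\<dots> = L2_set R V" by (simp add: L2_set_def)
    also have "\<dots> \<le> sum R V" by (rule L2_set_le_sum) (use Rnn in auto)
    finally show "y \<le> (\<Sum>u\<in>V. R u)" .
  qed
  have part1: "(\<Sum>u\<in>V. \<Sum>v\<in>V. (if {u,v}\<in>S then 1/m else 0)) = (\<Sum>u\<in>V. real (s u)) / m"
  proof -
    have "(\<Sum>v\<in>V. (if {u,v}\<in>S then 1/m else 0)) = real (s u) / m" for u
    proof -
      have "(\<Sum>v\<in>V. (if {u,v}\<in>S then 1/m else 0)) = (\<Sum>v\<in>{v\<in>V. {u,v}\<in>S}. 1/m)"
        by (rule sum.inter_filter[OF finV, symmetric])
      then show ?thesis by (simp add: s_def)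
    qed
    then show ?thesis by (simp add: sum_divide_distrib)
  qed
  have rowP: "(\<Sum>v\<in>V. (if P u v then \<delta> u / m^2 else 0)) \<le> \<delta> u * (c * m) / m^2" if u: "u \<in> V" for u
  proof -
    have "(\<Sum>v\<in>V. (if P u v then \<delta> u / m^2 else 0)) = (\<Sum>v\<in>{v\<in>V. P u v}. \<delta> u / m^2)"
      by (rule sum.inter_filter[OF finV, symmetric])
    also have "\<dots> = real (card {v\<in>V. P u v}) * \<delta> u / m^2" by simp
    also have "real (card {v\<in>V. P u v}) \<le> real (tdeg V E u)"
    proof -
      have "{v\<in>V. P u v} \<subseteq> insert u {v\<in>V. {v,u}\<in>E}" by (auto simp: P_def insert_commute)
      then have "card {v\<in>V. P u v} \<le> card (insert u {v\<in>V. {v,u}\<in>E})"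
        by (intro card_mono) (use finV in auto)
      also have "\<dots> \<le> Suc (card {v\<in>V. {v,u}\<in>E})" by (rule card_insert_le_m1) auto
      finally show ?thesis by (simp add: tdeg_def degree_def)
    qed
    then have "real (card {v\<in>V. P u v}) * \<delta> u / m^2 \<le> (c * m) * \<delta> u / m^2"
      using Mle[OF u] dnn[of u] mpos by (intro divide_right_mono mult_right_mono) auto
    finally show ?thesis by (simp add: mult.commute)
  qed
  have part2: "(\<Sum>u\<in>V. \<Sum>v\<in>V. (if P u v then (\<delta> u + \<delta> v)/m^2 else 0))
      \<le> 2 * (c / m) * (\<Sum>u\<in>V. \<delta> u)"
  proof -
    have split: "(if P u v then (\<delta> u + \<delta> v)/m^2 else 0)
        = (if P u v then \<delta> u/m^2 else 0) + (if P v u then \<delta> v/m^2 else 0)" for u v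
      using Psym[of u v] by (simp add: add_divide_distrib)
    have "(\<Sum>u\<in>V. \<Sum>v\<in>V. (if P u v then (\<delta> u + \<delta> v)/m^2 else 0))
       = (\<Sum>u\<in>V. \<Sum>v\<in>V. (if P u v then \<delta> u/m^2 else 0)) + (\<Sum>u\<in>V. \<Sum>v\<in>V. (if P v u then \<delta> v/m^2 else 0))"
      unfolding split by (simp add: sum.distrib)
    also have "(\<Sum>u\<in>V. \<Sum>v\<in>V. (if P v u then \<delta> v/m^2 else 0)) = (\<Sum>u\<in>V. \<Sum>v\<in>V. (if P u v then \<delta> u/m^2 else 0))"
      by (rule sum.swap)
    also have "(\<Sum>u\<in>V. \<Sum>v\<in>V. (if P u v then \<delta> u/m^2 else 0)) \<le> (\<Sum>u\<in>V. \<delta> u * (c * m) / m^2)"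
      by (rule sum_mono) (rule rowP)
    also have "(\<Sum>u\<in>V. \<delta> u * (c * m) / m^2) = (c / m) * (\<Sum>u\<in>V. \<delta> u)"
      using mpos by (simp add: sum_distrib_left power2_eq_square field_simps)
    finally show ?thesis by simp
  qed
  have "(\<Sum>u\<in>V. R u) = (\<Sum>u\<in>V. \<Sum>v\<in>V. (if {u,v}\<in>S then 1/m else 0))
       + (\<Sum>u\<in>V. \<Sum>v\<in>V. (if P u v then (\<delta> u + \<delta> v)/m^2 else 0))"
    by (simp add: R_def B_def sum.distrib)
  also have "\<dots> \<le> 2 * real K / m + 2 * (c / m) * (2 * real K)"
  proof (rule add_mono)
    show "(\<Sum>u\<in>V. \<Sum>v\<in>V. (if {u,v}\<in>S then 1/m else 0)) \<le> 2 * real K / m"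
      unfolding part1 using sumS mpos by (intro divide_right_mono) auto
    have "2 * (c / m) * (\<Sum>u\<in>V. \<delta> u) \<le> 2 * (c / m) * (2 * real K)"
      using sumd cpos mpos by (intro mult_left_mono) auto
    then show "(\<Sum>u\<in>V. \<Sum>v\<in>V. (if P u v then (\<delta> u + \<delta> v)/m^2 else 0)) \<le> 2 * (c / m) * (2 * real K)"
      using part2 by linarith
  qed
  also have "\<dots> = (2 + 4 * c) * real K / m" using mpos by (simp add: field_simps)
  finally show "spec_norm V (\<lambda>u v. norm_adj V E' u v - norm_adj V E u v)
           \<le> (2 + 4 * c) * real K / real (Min (tdeg V E ` V \<union> tdeg V E' ` V))"
    using spec by (simp add: m_def D_def)
qed

end
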